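(* Let $D$ be an oriented graph whose missing graph is a vertex-disjoint union of paths, and let $ab$, $xy$, $zt$ be missing edges of $D$. If $ab$ loses to $xy$ and $ab$ loses to $zt$, then $\{x,y\}\cap\{z,t\}\neq\emptyset$.
   Context: All digraphs are finite oriented graphs. $N^+(v)$ is the out-neighborhood; $N^{++}(v)$ is the set of vertices $w\notin N^+(v)\cup\{v\}$ with $u\to w$ for some $u\in N^+(v)$. A missing edge is a pair of distinct non-adjacent vertices; the missing graph is formed by the missing edges. For missing edges $\{x,y\},\{a,b\}$, $\{x,y\}$ loses to $\{a,b\}$ if the endpoints can be labelled so that $x\to a$, $b\notin N^+(x)\cup N^{++}(x)$, $y\to b$, $a\notin N^+(y)\cup N^{++}(y)$. *)

theory Defs
  imports Main
begin

definition oriented :: "'a set \<Rightarrow> ('a \<Rightarrow> 'a \<Rightarrow> bool) \<Rightarrow> bool" where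
  "oriented V A \<longleftrightarrow> finite V \<and>
     (\<forall>u v. A u v \<longrightarrow> u \<in> V \<and> v \<in> V \<and> u \<noteq> v \<and> \<not> A v u)"

definition out_nbhd :: "'a set \<Rightarrow> ('a \<Rightarrow> 'a \<Rightarrow> bool) \<Rightarrow> 'a \<Rightarrow> 'a set" where
  "out_nbhd V A v = {w \<in> V. A v w}"

definition second_out_nbhd :: "'a set \<Rightarrow> ('a \<Rightarrow> 'a \<Rightarrow> bool) \<Rightarrow> 'a \<Rightarrow> 'a set" where
  "second_out_nbhd V A v =
     {w \<in> V. w \<notin> out_nbhd V A v \<and> w \<noteq> v \<and> (\<exists>u \<in> out_nbhd V A v. A u w)}"

definition missing :: "'a set \<Rightarrow> ('a \<Rightarrow> 'a \<Rightarrow> bool) \<Rightarrow> 'a \<Rightarrow> 'a \<Rightarrow> bool" where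
  "missing V A u v \<longleftrightarrow> u \<in> V \<and> v \<in> V \<and> u \<noteq> v \<and> \<not> A u v \<and> \<not> A v u"

text \<open>A simple graph (V, E) is a vertex-disjoint union of paths: V is partitioned into
  the vertex sets of a family of paths (lists of distinct vertices; isolated vertices are
  one-vertex paths), and the edges are exactly the consecutive pairs of these paths.\<close>
definition union_of_paths :: "'a set \<Rightarrow> ('a \<Rightarrow> 'a \<Rightarrow> bool) \<Rightarrow> bool" where
  "union_of_paths V E \<longleftrightarrow> (\<exists>P :: 'a list set.
     (\<forall>p \<in> P. p \<noteq> [] \<and> distinct p) \<and>
     (\<forall>p \<in> P. \<forall>q \<in> P. p \<noteq> q \<longrightarrow> set p \<inter> set q = {}) \<and>
     (\<Union>p \<in> P. set p) = V \<and>
     (\<forall>u v. E u v \<longleftrightarrow>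
        (\<exists>p \<in> P. \<exists>i. Suc i < length p \<and> {p ! i, p ! Suc i} = {u, v})))"

text \<open>The missing edge {x,y} loses to the missing edge {a,b}.\<close>
definition loses_to :: "'a set \<Rightarrow> ('a \<Rightarrow> 'a \<Rightarrow> bool) \<Rightarrow> 'a \<Rightarrow> 'a \<Rightarrow> 'a \<Rightarrow> 'a \<Rightarrow> bool" where
  "loses_to V A x y a b \<longleftrightarrow> (\<exists>x' y' a' b'. {x', y'} = {x, y} \<and> {a', b'} = {a, b} \<and>
     A x' a' \<and> b' \<notin> out_nbhd V A x' \<union> second_out_nbhd V A x' \<and>
     A y' b' \<and> a' \<notin> out_nbhd V A y' \<union> second_out_nbhd V A y')"

end

theory Submission
  imports Defs
begin

lemma edge_idx:
  assumes "distinct p" "Suc i < length p" "{p!i, p!Suc i} = {u,v}"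
    "j < length p" "p!j = u" "k < length p" "p!k = v"
  shows "j = Suc k \<or> k = Suc j"
proof -
  have "(p!i = u \<and> p!Suc i = v) \<or> (p!i = v \<and> p!Suc i = u)"
    using assms(3) by (auto simp: doubleton_eq_iff)
  then show ?thesis
  proof
    assume h: "p!i = u \<and> p!Suc i = v"
    then have "j = i" "k = Suc i" using assms nth_eq_iff_index_eq[of p] by auto
    then show ?thesis by simp
  next
    assume h: "p!i = v \<and> p!Suc i = u"
    then have "j = Suc i" "k = i" using assms nth_eq_iff_index_eq[of p] by auto
    then show ?thesis by simp
  qed
qed

lemma no_4cycle:
  assumes "union_of_paths V E" "E c1 c2" "E c2 c3" "E c3 c4" "E c4 c1"
    "distinct [c1,c2,c3,c4]"
  shows False
proof -
  obtain P where P1: "\<forall>p \<in> P. p \<noteq> [] \<and> distinct p"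
    and P2: "\<forall>p \<in> P. \<forall>q \<in> P. p \<noteq> q \<longrightarrow> set p \<inter> set q = {}"
    and P4: "\<forall>u v. E u v \<longleftrightarrow>
        (\<exists>p \<in> P. \<exists>i. Suc i < length p \<and> {p ! i, p ! Suc i} = {u, v})"
    using assms(1) unfolding union_of_paths_def by blast
  have memb: "u \<in> set p \<and> v \<in> set p"
    if "Suc i < length p" "{p ! i, p ! Suc i} = {u, v}" for p i u v
  proof -
    have "p!i \<in> set p" "p!Suc i \<in> set p" using that(1) by auto
    then show ?thesis using that(2) by (auto simp: doubleton_eq_iff)
  qed
  obtain p1 i1 where e1: "p1 \<in> P" "Suc i1 < length p1" "{p1!i1, p1!Suc i1} = {c1,c2}"
    using assms(2) P4 by blast
  obtain p2 i2 where e2: "p2 \<in> P" "Suc i2 < length p2" "{p2!i2, p2!Suc i2} = {c2,c3}"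
    using assms(3) P4 by blast
  obtain p3 i3 where e3: "p3 \<in> P" "Suc i3 < length p3" "{p3!i3, p3!Suc i3} = {c3,c4}"
    using assms(4) P4 by blast
  obtain p4 i4 where e4: "p4 \<in> P" "Suc i4 < length p4" "{p4!i4, p4!Suc i4} = {c4,c1}"
    using assms(5) P4 by blast
  have m1: "c1 \<in> set p1" "c2 \<in> set p1" using memb[OF e1(2,3)] by auto
  have m2: "c2 \<in> set p2" "c3 \<in> set p2" using memb[OF e2(2,3)] by auto
  have m3: "c3 \<in> set p3" "c4 \<in> set p3" using memb[OF e3(2,3)] by auto
  have m4: "c4 \<in> set p4" "c1 \<in> set p4" using memb[OF e4(2,3)] by auto
  have "p2 = p1" using P2 e1(1) e2(1) m1 m2 by blast
  moreover have "p3 = p2" using P2 e3(1) e2(1) m3 m2 by blast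
  moreover have "p4 = p3" using P2 e3(1) e4(1) m3 m4 by blast
  ultimately have eq: "p2 = p1" "p3 = p1" "p4 = p1" by auto
  have dp: "distinct p1" using P1 e1(1) by auto
  obtain j1 where j1: "j1 < length p1" "p1!j1 = c1" using m1 by (auto simp: in_set_conv_nth)
  obtain j2 where j2: "j2 < length p1" "p1!j2 = c2" using m1 by (auto simp: in_set_conv_nth)
  obtain j3 where j3: "j3 < length p1" "p1!j3 = c3" using m2 eq by (auto simp: in_set_conv_nth)
  obtain j4 where j4: "j4 < length p1" "p1!j4 = c4" using m3 eq by (auto simp: in_set_conv_nth)
  have a1: "j1 = Suc j2 \<or> j2 = Suc j1" using edge_idx[OF dp e1(2,3) j1 j2] .
  have a2: "j2 = Suc j3 \<or> j3 = Suc j2" using edge_idx[OF dp _ _ j2 j3] e2 eq by auto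
  have a3: "j3 = Suc j4 \<or> j4 = Suc j3" using edge_idx[OF dp _ _ j3 j4] e3 eq by auto
  have a4: "j4 = Suc j1 \<or> j1 = Suc j4" using edge_idx[OF dp _ _ j4 j1] e4 eq by auto
  have "j1 \<noteq> j3" using j1 j3 assms(6) by auto
  moreover have "j2 \<noteq> j4" using j2 j4 assms(6) by auto
  ultimately show False using a1 a2 a3 a4 by arith
qed

lemma nb:
  assumes "oriented V A" "A r w" "w' \<notin> out_nbhd V A r \<union> second_out_nbhd V A r" "w' \<noteq> w"
  shows "\<not> A w w'"
proof
  assume h: "A w w'"
  have "w' \<in> V" "w' \<noteq> r" using assms(1,2) h unfolding oriented_def by blast+
  moreover have "w \<in> out_nbhd V A r" using assms(1,2) unfolding oriented_def out_nbhd_def by blast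
  ultimately have "w' \<in> out_nbhd V A r \<union> second_out_nbhd V A r"
    using h unfolding second_out_nbhd_def by blast
  then show False using assms(3) by blast
qed

lemma miss:
  assumes "oriented V A" "\<not> A u v" "\<not> A v u" "u \<noteq> v" "A r u" "A s v"
  shows "missing V A u v"
  using assms unfolding missing_def oriented_def by blast

theorem lemma4p1:
  fixes V :: "'a set" and A :: "'a \<Rightarrow> 'a \<Rightarrow> bool" and a b x y z t :: 'a
  assumes "oriented V A"
    and "union_of_paths V (missing V A)"
    and "missing V A a b" and "missing V A x y" and "missing V A z t"
    and "loses_to V A a b x y" and "loses_to V A a b z t"
  shows "{x, y} \<inter> {z, t} \<noteq> {}"
proof
  assume dj: "{x, y} \<inter> {z, t} = {}"
  obtain p q u v where L: "{p,q} = {a,b}" "{u,v} = {x,y}" "A p u"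
      "v \<notin> out_nbhd V A p \<union> second_out_nbhd V A p" "A q v"
      "u \<notin> out_nbhd V A q \<union> second_out_nbhd V A q"
    using assms(6) unfolding loses_to_def by blast
  obtain p2 q2 u2 v2 where L2: "{p2,q2} = {a,b}" "{u2,v2} = {z,t}" "A p2 u2"
      "v2 \<notin> out_nbhd V A p2 \<union> second_out_nbhd V A p2" "A q2 v2"
      "u2 \<notin> out_nbhd V A q2 \<union> second_out_nbhd V A q2"
    using assms(7) unfolding loses_to_def by blast
  have ab: "a \<noteq> b" using assms(3) unfolding missing_def by blast
  have uv: "u \<noteq> v" "\<not> A u v" "\<not> A v u" using assms(4) L(2) unfolding missing_def
    by (auto simp: doubleton_eq_iff)
  have uv2: "u2 \<noteq> v2" "\<not> A u2 v2" "\<not> A v2 u2" using assms(5) L2(2) unfolding missing_def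
    by (auto simp: doubleton_eq_iff)
  have d: "u \<noteq> u2" "u \<noteq> v2" "v \<noteq> u2" "v \<noteq> v2" using dj L(2) L2(2) by blast+
  have muv: "missing V A u v" using miss[OF assms(1) uv(2,3,1) L(3,5)] .
  have muv2: "missing V A u2 v2" using miss[OF assms(1) uv2(2,3,1) L2(3,5)] .
  have sym: "missing V A s r" if "missing V A r s" for r s using that unfolding missing_def by blast
  show False
  proof (cases "p2 = p \<and> q2 = q")
    case c: True
    have 1: "\<not> A v u2" using nb[OF assms(1) L(5), of u2] L2(6) c d by auto
    have 2: "\<not> A u2 v" using nb[OF assms(1) L2(3), of v] L(4) c d by auto
    have 3: "\<not> A v2 u" using nb[OF assms(1) L2(5), of u] L(6) c d by auto
    have 4: "\<not> A u v2" using nb[OF assms(1) L(3), of v2] L2(4) c d by auto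
    have m1: "missing V A v u2" using miss[OF assms(1) 1 2 d(3) L(5) L2(3)] .
    have m2: "missing V A v2 u" using miss[OF assms(1) 3 4 d(2)[symmetric] L2(5) L(3)] .
    show False using no_4cycle[OF assms(2) muv m1 muv2 m2] uv uv2 d by auto
  next
    case nc: False
    then have c: "p2 = q \<and> q2 = p" using L(1) L2(1) ab by (auto simp: doubleton_eq_iff)
    have 1: "\<not> A v v2" using nb[OF assms(1) L(5), of v2] L2(4) c d by auto
    have 2: "\<not> A v2 v" using nb[OF assms(1) L2(5), of v] L(4) c d by auto
    have 3: "\<not> A u2 u" using nb[OF assms(1) L2(3), of u] L(6) c d by auto
    have 4: "\<not> A u u2" using nb[OF assms(1) L(3), of u2] L2(6) c d by auto
    have m1: "missing V A v v2" using miss[OF assms(1) 1 2 d(4) L(5) L2(5)] .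
    have m2: "missing V A u2 u" using miss[OF assms(1) 3 4 d(1)[symmetric] L2(3) L(3)] .
    show False using no_4cycle[OF assms(2) muv m1 sym[OF muv2] m2] uv uv2 d by auto
  qed
qed

end
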